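(* Let $d\ge1$, $f$ a monic hyperbolic polynomial of degree $d$, $0\le s\le d$, and $u$ a composition of $d$ with $l=\ell(u)>s$. Then the map $P^{d-l}:H_s^u(f)\to\mathbb{R}^{l-s}$, $t^d+h_1t^{d-1}+\dots+h_d\mapsto(h_{s+1},\dots,h_l)$, is a homeomorphism onto its image, and its image is closed in $\mathbb{R}^{l-s}$.
   Context: Hyperbolic: all roots real. $f=t^d+f_1t^{d-1}+\dots+f_d$; $H_s(f)$ is the set of monic hyperbolic degree-$d$ polynomials $h=t^d+h_1t^{d-1}+\dots+h_d$ with $h_i=f_i$ for $1\le i\le s$, identified with $(h_{s+1},\dots,h_d)\in\mathbb{R}^{d-s}$ with the Euclidean subspace topology. Compositions of $d$: tuples of positive integers summing to $d$, length $\ell(u)$; $v\le u$ iff $v$ arises from $u$ by merging consecutive parts. $v(h)$ is the tuple of multiplicities of the distinct roots of $h$ in increasing order; $H_s^u(f)=\{h\in H_s(f):v(h)\le u\}$. *)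

theory Defs
  imports "HOL-Analysis.Analysis" "HOL-Computational_Algebra.Polynomial"
begin

definition hyperbolic :: "real poly \<Rightarrow> bool" where
  "hyperbolic h \<longleftrightarrow> (\<forall>z::complex. poly (map_poly complex_of_real h) z = 0 \<longrightarrow> z \<in> \<real>)"

definition mpoly :: "nat \<Rightarrow> (nat \<Rightarrow> real) \<Rightarrow> real poly" where
  "mpoly d c = monom 1 d + (\<Sum>i=1..d. monom (c i) (d - i))"

definition hcoeff :: "nat \<Rightarrow> real poly \<Rightarrow> nat \<Rightarrow> real" where
  "hcoeff d h i = coeff h (d - i)"

definition monic_deg :: "nat \<Rightarrow> real poly \<Rightarrow> bool" where
  "monic_deg d h \<longleftrightarrow> degree h = d \<and> lead_coeff h = 1"

definition composition :: "nat \<Rightarrow> nat list \<Rightarrow> bool" where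
  "composition d u \<longleftrightarrow> (\<forall>a\<in>set u. 0 < a) \<and> sum_list u = d"

inductive merge1 :: "nat list \<Rightarrow> nat list \<Rightarrow> bool" where
  "merge1 (xs @ a # b # ys) (xs @ (a + b) # ys)"

definition comp_le :: "nat list \<Rightarrow> nat list \<Rightarrow> bool" where
  "comp_le v u \<longleftrightarrow> merge1\<^sup>*\<^sup>* u v"

definition mult_tuple :: "real poly \<Rightarrow> nat list" where
  "mult_tuple h = map (\<lambda>r. order r h) (sorted_list_of_set {r. poly h r = 0})"

text \<open>H_s(f) as a subset of R^(d-s): points are functions nat \<Rightarrow> real supported on
  {s+1..d}, the value at i being the coefficient h_i.\<close>
definition Hpoly :: "nat \<Rightarrow> nat \<Rightarrow> real poly \<Rightarrow> (nat \<Rightarrow> real) \<Rightarrow> real poly" where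
  "Hpoly d s f x = mpoly d (\<lambda>i. if i \<le> s then hcoeff d f i else x i)"

definition Hs :: "nat \<Rightarrow> nat \<Rightarrow> real poly \<Rightarrow> (nat \<Rightarrow> real) set" where
  "Hs d s f = {x. (\<forall>i. i \<notin> {s<..d} \<longrightarrow> x i = 0) \<and> hyperbolic (Hpoly d s f x)}"

definition Hsu :: "nat \<Rightarrow> nat \<Rightarrow> real poly \<Rightarrow> nat list \<Rightarrow> (nat \<Rightarrow> real) set" where
  "Hsu d s f u = {x \<in> Hs d s f. comp_le (mult_tuple (Hpoly d s f x)) u}"

text \<open>Coordinate space R^(m-s), indexed by {s+1..m}.\<close>
definition coord_space :: "nat \<Rightarrow> nat \<Rightarrow> (nat \<Rightarrow> real) set" where
  "coord_space s m = {x. \<forall>i. i \<notin> {s<..m} \<longrightarrow> x i = 0}"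

definition proj :: "nat \<Rightarrow> nat \<Rightarrow> (nat \<Rightarrow> real) \<Rightarrow> (nat \<Rightarrow> real)" where
  "proj s l x = (\<lambda>i. if s < i \<and> i \<le> l then x i else 0)"

end

theory Submission
  imports Defs "HOL-Computational_Algebra.Fundamental_Theorem_Algebra"
begin
definition PP :: "nat list \<Rightarrow> real list \<Rightarrow> real poly" where
  "PP u a = prod_list (map2 (\<lambda>m r. [:-r,1:]^m) u a)"

lemma PP_Nil[simp]: "PP [] a = 1" "PP u [] = 1" by (simp_all add: PP_def)
lemma PP_Cons[simp]: "PP (m#u) (r#a) = [:-r,1:]^m * PP u a" by (simp add: PP_def)
lemma PP_append: "length u1 = length a1 \<Longrightarrow> PP (u1@u2) (a1@a2) = PP u1 a1 * PP u2 a2"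
  by (simp add: PP_def zip_append)

lemma poly_PP: "poly (PP u a) x = prod_list (map2 (\<lambda>m r. (x-r)^m) u a)"
proof (induction u arbitrary: a)
  case (Cons m u) then show ?case by (cases a) auto
qed simp

lemma PP_nz: "PP u a \<noteq> 0"
proof (induction u arbitrary: a)
  case (Cons m u) then show ?case by (cases a) auto
qed simp

lemma PP_degree: "length u = length a \<Longrightarrow> degree (PP u a) = sum_list u"
proof (induction u arbitrary: a)
  case (Cons m u) then show ?case
    by (cases a) (auto simp: degree_mult_eq PP_nz degree_linear_power)
qed simp

lemma PP_lead: "lead_coeff (PP u a) = 1"
proof (induction u arbitrary: a)
  case (Cons m u) then show ?case
    by (cases a) (auto simp: lead_coeff_mult lead_coeff_power)
qed simp

lemma PP_root: "length u = length a \<Longrightarrow> \<forall>m\<in>set u. 0<m \<Longrightarrow> poly (PP u a) x = 0 \<longleftrightarrow> x \<in> set a"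
proof (induction u arbitrary: a)
  case (Cons m u) then show ?case by (cases a) auto
qed simp

lemma PP_notroot: "x \<notin> set a \<Longrightarrow> poly (PP u a) x \<noteq> 0"
proof (induction u arbitrary: a)
  case (Cons m u) then show ?case by (cases a) auto
qed simp

lemma order_map_PP: "distinct b \<Longrightarrow> length M = length b \<Longrightarrow> map (\<lambda>x. order x (PP M b)) b = M"
proof (induction b arbitrary: M)
  case Nil then show ?case by simp
next
  case (Cons r b)
  then obtain m M' where M: "M = m # M'" "length M' = length b" by (cases M) auto
  have nz: "[:-r,1:]^m * PP M' b \<noteq> 0" using PP_nz by simp
  have 1: "order r (PP M (r#b)) = m"
  proof -
    have "order r (PP M (r#b)) = order r ([:-r,1:]^m) + order r (PP M' b)"
      using M nz by (simp add: order_mult)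
    also have "order r (PP M' b) = 0" using Cons.prems PP_notroot by (intro order_0I) auto
    finally show ?thesis by (simp add: order_power_n_n)
  qed
  have 2: "order x (PP M (r#b)) = order x (PP M' b)" if "x \<in> set b" for x
  proof -
    have "x \<noteq> r" using that Cons.prems by auto
    have "order x (PP M (r#b)) = order x ([:-r,1:]^m) + order x (PP M' b)"
      using M nz by (simp add: order_mult)
    also have "order x ([:-r,1:]^m) = 0" using \<open>x \<noteq> r\<close> by (intro order_0I) auto
    finally show ?thesis by simp
  qed
  have "map (\<lambda>x. order x (PP M (r#b))) b = map (\<lambda>x. order x (PP M' b)) b"
    using 2 by (intro map_cong) auto
  also have "\<dots> = M'" using Cons M by auto
  finally show ?case using 1 M by simp
qed

lemma mult_tuple_PP:
  assumes "sorted_wrt (<) b" "length M = length b" "\<forall>m\<in>set M. 0<m"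
  shows "mult_tuple (PP M b) = M"
proof -
  have "{r. poly (PP M b) r = 0} = set b" using PP_root assms by auto
  moreover have "sorted_list_of_set (set b) = b"
    using assms(1) by (simp add: strict_sorted_iff sorted_list_of_set.idem_if_sorted_distinct)
  ultimately show ?thesis using order_map_PP assms by (simp add: mult_tuple_def strict_sorted_iff)
qed

lemma merge1_Cons: "merge1 u v \<Longrightarrow> merge1 (m#u) (m#v)"
proof (induction rule: merge1.induct)
  case (1 xs a b ys) then show ?case using merge1.intros[of "m#xs" a b ys] by simp
qed

lemma merge_star_Cons: "merge1\<^sup>*\<^sup>* u v \<Longrightarrow> merge1\<^sup>*\<^sup>* (m#u) (m#v)"
  by (induction rule: rtranclp_induct) (auto intro: rtranclp.rtrancl_into_rtrancl merge1_Cons)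

lemma group:
  "sorted t \<Longrightarrow> length v = length t \<Longrightarrow> \<forall>m\<in>set v. 0<m \<Longrightarrow>
   \<exists>M b. sorted_wrt (<) b \<and> length M = length b \<and> (\<forall>m\<in>set M. 0<m) \<and> set b = set t
     \<and> PP M b = PP v t \<and> merge1\<^sup>*\<^sup>* v M"
proof (induction t arbitrary: v)
  case Nil then show ?case by (intro exI[of _ "[]"]) auto
next
  case (Cons r t)
  then obtain m v' where v: "v = m # v'" "length v' = length t" by (cases v) auto
  from Cons.IH[of v'] Cons.prems v obtain M' b' where IH: "sorted_wrt (<) b'" "length M' = length b'" "\<forall>m\<in>set M'. 0<m"
    "set b' = set t" "PP M' b' = PP v' t" "merge1\<^sup>*\<^sup>* v' M'" by auto
  have ge: "\<forall>x\<in>set b'. r \<le> x" using Cons.prems(1) IH(4) by auto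
  show ?case
  proof (cases b')
    case Nil
    then have "t = []" using IH(4) by auto
    then show ?thesis using v Cons.prems IH Nil by (intro exI[of _ "[m]"] exI[of _ "[r]"]) auto
  next
    case (Cons r' b'')
    note b'C = this
    then obtain m' M'' where M': "M' = m' # M''" "length M'' = length b''" using IH(2) by (cases M') auto
    show ?thesis
    proof (cases "r' = r")
      case True
      have "merge1\<^sup>*\<^sup>* v (m # M')" using v IH(6) merge_star_Cons by simp
      moreover have "merge1 (m # m' # M'') ((m+m') # M'')" using merge1.intros[of "[]" m m' M''] by simp
      ultimately have mm: "merge1\<^sup>*\<^sup>* v ((m+m') # M'')" using M' by auto
      have "PP ((m+m') # M'') b' = PP v (r # t)"
        using True b'C M' v IH(5)[symmetric] by (simp add: power_add mult.assoc)
      moreover have "set b' = set (r # t)" using IH(4) True b'C by auto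
      ultimately show ?thesis using IH M' mm b'C Cons.prems v
        by (intro exI[of _ "(m+m') # M''"] exI[of _ b']) auto
    next
      case False
      have gt: "\<forall>x\<in>set b'. r < x"
      proof
        fix x assume "x \<in> set b'"
        then have "x = r' \<or> x \<in> set b''" using b'C by auto
        moreover have "r \<le> r'" using ge b'C by auto
        moreover have "\<forall>y\<in>set b''. r' < y" using IH(1) b'C by auto
        ultimately show "r < x" using False by force
      qed
      show ?thesis using IH gt v Cons.prems merge_star_Cons[OF IH(6)]
        by (intro exI[of _ "m # M'"] exI[of _ "r # b'"]) auto
    qed
  qed
qed

lemma unmerge:
  "merge1\<^sup>*\<^sup>* u M \<Longrightarrow> sorted b \<Longrightarrow> length b = length M \<Longrightarrow>
   \<exists>a. sorted a \<and> length a = length u \<and> PP u a = PP M b"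
proof (induction rule: converse_rtranclp_induct)
  case base then show ?case by auto
next
  case (step u w)
  then obtain a' where a': "sorted a'" "length a' = length w" "PP w a' = PP M b" by auto
  from step(1) obtain xs p q ys where uw: "u = xs @ p # q # ys" "w = xs @ (p+q) # ys"
    by (cases rule: merge1.cases) auto
  define as where "as = take (length xs) a'"
  define r where "r = a' ! length xs"
  define bs where "bs = drop (Suc (length xs)) a'"
  have a'eq: "a' = as @ r # bs" unfolding as_def r_def bs_def using a' uw
    by (simp add: id_take_nth_drop)
  have las: "length as = length xs" using a' uw unfolding as_def by simp
  have "sorted (as @ r # r # bs)" using a'(1) unfolding a'eq by (auto simp: sorted_append)
  moreover have "length (as @ r # r # bs) = length u" using a' uw a'eq las by simp
  moreover have "PP u (as @ r # r # bs) = PP M b"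
    using a'(3) uw a'eq las by (simp add: PP_append power_add mult.assoc)
  ultimately show ?case by blast
qed

lemma mp_cr_mult: "map_poly complex_of_real (p*q) = map_poly complex_of_real p * map_poly complex_of_real q"
  by (rule poly_eqI) (simp add: coeff_map_poly coeff_mult of_real_sum)

lemma hyp_mult: "hyperbolic p \<Longrightarrow> hyperbolic q \<Longrightarrow> hyperbolic (p*q)"
  unfolding hyperbolic_def by (auto simp: mp_cr_mult)

lemma hyp_one: "hyperbolic 1"
  unfolding hyperbolic_def by simp

lemma hyp_lin: "hyperbolic [:-r,1:]"
  unfolding hyperbolic_def by (auto simp: map_poly_pCons)

lemma hyp_pow: "hyperbolic p \<Longrightarrow> hyperbolic (p^n)"
  by (induction n) (auto simp: hyp_one hyp_mult)

lemma hyp_PP: "hyperbolic (PP u a)"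
proof (induction u arbitrary: a)
  case Nil then show ?case by (simp add: hyp_one)
next
  case (Cons m u) then show ?case by (cases a) (auto simp: hyp_one hyp_mult hyp_pow hyp_lin)
qed

lemma poly_cr: "poly (map_poly complex_of_real p) (complex_of_real x) = complex_of_real (poly p x)"
  by (induction p) (auto simp: map_poly_pCons)

lemma hyp_factor:
  "degree h = n \<Longrightarrow> lead_coeff h = 1 \<Longrightarrow> hyperbolic h \<Longrightarrow>
   \<exists>t. length t = n \<and> h = prod_list (map (\<lambda>r. [:-r,1:]) t)"
proof (induction n arbitrary: h)
  case 0
  have "h = 1"
  proof (rule poly_eqI)
    fix k show "coeff h k = coeff 1 k"
      using 0 by (cases k) (auto simp: coeff_eq_0)
  qed
  then show ?case by simp
next
  case (Suc n)
  define H where "H = map_poly complex_of_real h"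
  have "degree H = degree h" unfolding H_def by (rule degree_map_poly) simp
  then have "\<not> constant (poly H)" using Suc.prems by (simp add: constant_degree)
  then obtain z where z: "poly H z = 0" using fundamental_theorem_of_algebra by blast
  then have "z \<in> \<real>" using Suc.prems unfolding hyperbolic_def H_def by auto
  then obtain r where r: "z = complex_of_real r" by (auto elim: Reals_cases)
  have "poly h r = 0" using z r poly_cr[of h r] unfolding H_def by simp
  then have "[:-r,1:] dvd h" by (simp add: poly_eq_0_iff_dvd)
  then obtain q where q: "h = [:-r,1:] * q" by (auto elim: dvdE)
  have hnz: "h \<noteq> 0" using Suc.prems by auto
  then have qnz: "q \<noteq> 0" using q by auto
  have "degree h = degree [:-r,1:] + degree q" unfolding q by (rule degree_mult_eq) (use qnz in auto)
  then have dq: "degree q = n" using Suc.prems by simp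
  have "lead_coeff h = lead_coeff [:-r,1:] * lead_coeff q" unfolding q by (rule lead_coeff_mult)
  then have lq: "lead_coeff q = 1" using Suc.prems by simp
  have hq: "hyperbolic q"
    unfolding hyperbolic_def
  proof (intro allI impI)
    fix w assume "poly (map_poly complex_of_real q) w = 0"
    then have "poly (map_poly complex_of_real h) w = 0" unfolding q mp_cr_mult poly_mult by simp
    then show "w \<in> \<real>" using Suc.prems unfolding hyperbolic_def by auto
  qed
  from Suc.IH[OF dq lq hq] obtain t where "length t = n" "q = prod_list (map (\<lambda>r. [:-r,1:]) t)" by auto
  then show ?case using q by (intro exI[of _ "r#t"]) auto
qed

lemma PP_ones: "PP (replicate (length t) 1) t = prod_list (map (\<lambda>r. [:-r,1:]) t)"
  by (induction t) auto

lemma hyp_sorted: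
  assumes "degree h = n" "lead_coeff h = 1" "hyperbolic h"
  shows "\<exists>t. sorted t \<and> length t = n \<and> h = PP (replicate n 1) t"
proof -
  obtain t where t: "length t = n" "h = prod_list (map (\<lambda>r. [:-r,1:]) t)"
    using hyp_factor[OF assms] by auto
  have "prod_list (map (\<lambda>r. [:-r,1:]) (sort t)) = prod_list (map (\<lambda>r. [:-r,1:]) t)"
  proof -
    have "prod_list (map (\<lambda>r. [:-r,1:]) (sort t)) = prod_mset (mset (map (\<lambda>r. [:-r,1:]) (sort t)))"
      by (simp only: prod_mset_prod_list)
    also have "mset (map (\<lambda>r. [:-r,1:]) (sort t)) = mset (map (\<lambda>r. [:-r,1:]) t)"
      by (simp only: mset_map mset_sort)
    also have "prod_mset \<dots> = prod_list (map (\<lambda>r. [:-r,1:]) t)"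
      by (simp only: prod_mset_prod_list)
    finally show ?thesis .
  qed
  then have "h = PP (replicate n 1) (sort t)" using t PP_ones[of "sort t"] by simp
  then show ?thesis using t by (intro exI[of _ "sort t"]) auto
qed

lemma char_i:
  assumes "monic_deg d h" "hyperbolic h" "comp_le (mult_tuple h) u"
  shows "\<exists>a. sorted a \<and> length a = length u \<and> h = PP u a"
proof -
  obtain t where t: "sorted t" "length t = d" "h = PP (replicate d 1) t"
    using hyp_sorted assms unfolding monic_deg_def by blast
  obtain M b where Mb: "sorted_wrt (<) b" "length M = length b" "\<forall>m\<in>set M. 0<m"
      "PP M b = PP (replicate d 1) t"
    using group[OF t(1), of "replicate d 1"] t by auto
  have "mult_tuple h = M" using mult_tuple_PP[OF Mb(1-3)] Mb(4) t(3) by simp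
  then have "merge1\<^sup>*\<^sup>* u M" using assms(3) unfolding comp_le_def by simp
  moreover have "sorted b" using Mb(1) by (simp add: strict_sorted_iff)
  ultimately obtain a where "sorted a" "length a = length u" "PP u a = PP M b"
    using unmerge[of u M b] Mb(2) by auto
  then show ?thesis using Mb(4) t(3) by auto
qed

lemma char_ii:
  assumes "sorted a" "length a = length u" "\<forall>m\<in>set u. 0<m"
  shows "hyperbolic (PP u a) \<and> comp_le (mult_tuple (PP u a)) u"
proof -
  obtain M b where Mb: "sorted_wrt (<) b" "length M = length b" "\<forall>m\<in>set M. 0<m"
      "PP M b = PP u a" "merge1\<^sup>*\<^sup>* u M"
    using group[OF assms(1), of u] assms by auto
  have "mult_tuple (PP u a) = M" using mult_tuple_PP[OF Mb(1-3)] Mb(4) by simp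
  then show ?thesis using Mb(5) hyp_PP by (simp add: comp_le_def)
qed

definition RG :: "real list \<Rightarrow> real fps" where
  "RG t = prod_list (map (\<lambda>r. 1 + fps_const (-r) * fps_X) t)"
definition psum :: "real list \<Rightarrow> nat \<Rightarrow> real" where
  "psum t k = sum_list (map (\<lambda>x. x^k) t)"

lemma geo_aux: "(1 + fps_const (-r) * fps_X) * Abs_fps (\<lambda>k. r^Suc k) = fps_const (r::real)"
proof (rule fps_ext)
  fix n show "fps_nth ((1 + fps_const (-r) * fps_X) * Abs_fps (\<lambda>k. r^Suc k)) n = fps_nth (fps_const r) n"
  proof -
    define A where "A = Abs_fps (\<lambda>k. r^Suc k)"
    have "(1 + fps_const (-r) * fps_X) * A = A + fps_const (-r) * (fps_X * A)"
      by (simp add: distrib_right mult.assoc)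
    moreover have "fps_nth (A + fps_const (-r) * (fps_X * A)) n = fps_nth (fps_const r) n"
      by (cases n) (simp_all add: A_def fps_X_mult_nth)
    ultimately show ?thesis unfolding A_def by simp
  qed
qed

lemma RG_deriv: "fps_deriv (RG t) = - (RG t * Abs_fps (\<lambda>k. psum t (Suc k)))"
proof (induction t)
  case Nil
  have "Abs_fps (\<lambda>k. psum [] (Suc k)) = 0" by (rule fps_ext) (simp add: psum_def)
  then show ?case by (simp add: RG_def)
next
  case (Cons r t)
  define G where "G = RG t"
  define S where "S = Abs_fps (\<lambda>k. psum t (Suc k))"
  define R where "R = Abs_fps (\<lambda>k. r^Suc k)"
  define L where "L = (1 + fps_const (-r) * fps_X :: real fps)"
  have RG: "RG (r#t) = L * G" by (simp add: RG_def G_def L_def)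
  have PS: "Abs_fps (\<lambda>k. psum (r#t) (Suc k)) = R + S"
    by (rule fps_ext) (simp add: psum_def R_def S_def)
  have dL: "fps_deriv L = fps_const (-r)" by (simp add: L_def)
  have LR: "L * R = fps_const r" unfolding L_def R_def by (rule geo_aux)
  have "fps_deriv (RG (r#t)) = fps_const (-r) * G + L * (- (G * S))"
    using Cons.IH by (simp add: RG dL G_def S_def)
  also have "\<dots> = - (L * G * (R + S))"
  proof -
    have "L * G * (R + S) = (L * R) * G + L * (G * S)" by (simp add: algebra_simps)
    moreover have e: "fps_const (-r) = - fps_const (r::real)" by (metis fps_const_neg)
    ultimately show ?thesis unfolding e using LR by (simp add: algebra_simps del: fps_const_neg)
  qed
  finally show ?case using RG PS by simp
qed

lemma RG_newton: "of_nat (Suc k) * (fps_nth (RG t) (Suc k)) = - (\<Sum>i=0..k. fps_nth (RG t) (i) * psum t (Suc k - i))"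
proof -
  have "fps_nth (fps_deriv (RG t)) k = fps_nth (- (RG t * Abs_fps (\<lambda>k. psum t (Suc k)))) k"
    using RG_deriv by simp
  then show ?thesis by (simp add: fps_mult_nth Suc_diff_le)
qed

lemma RG_0: "fps_nth (RG t) (0) = 1"
proof (induction t)
  case (Cons r t) then show ?case by (simp add: RG_def fps_mult_nth)
qed (simp add: RG_def)

definition lins :: "real list \<Rightarrow> real poly" where
  "lins t = prod_list (map (\<lambda>r. [:-r,1:]) t)"

lemma reflect_lins: "reflect_poly (lins t) = prod_list (map (\<lambda>r. [:1,-r:]) t)"
proof (induction t)
  case Nil then show ?case by (simp add: lins_def)
next
  case (Cons r t)
  have e: "reflect_poly [:-r,1:] = [:1,-r:]" by (simp add: reflect_poly_def)
  have "reflect_poly (lins (r#t)) = reflect_poly [:-r,1:] * reflect_poly (lins t)"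
    by (simp only: lins_def list.map prod_list.Cons reflect_poly_mult)
  then show ?case using Cons e by (simp only: list.map prod_list.Cons)
qed

lemma fps_lins: "fps_of_poly (reflect_poly (lins t)) = RG t"
proof (induction t)
  case Nil then show ?case by (simp add: lins_def RG_def)
next
  case (Cons r t)
  have "fps_of_poly (reflect_poly (lins (r#t))) = fps_of_poly [:1,-r:] * fps_of_poly (reflect_poly (lins t))"
    by (simp only: reflect_lins list.map prod_list.Cons fps_of_poly_mult)
  then show ?case using Cons by (simp only: RG_def list.map prod_list.Cons fps_of_poly_linear')
qed

lemma degree_lins: "degree (lins t) = length t"
  unfolding lins_def PP_ones[symmetric] by (simp add: PP_degree sum_list_replicate)

lemma RG_coeff: "k \<le> length t \<Longrightarrow> fps_nth (RG t) (k) = coeff (lins t) (length t - k)"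
  by (simp flip: fps_lins add: coeff_reflect_poly degree_lins)

lemma newton_eq:
  assumes "length t = n" "length s = n" "l \<le> n"
    and "\<And>k. k \<le> l \<Longrightarrow> coeff (lins t) (n - k) = coeff (lins s) (n - k)"
  shows "1 \<le> k \<Longrightarrow> k \<le> l \<Longrightarrow> psum t k = psum s k"
proof (induction k rule: less_induct)
  case (less k)
  then obtain j where k: "k = Suc j" by (cases k) auto
  have G: "fps_nth (RG t) (i) = fps_nth (RG s) (i)" if "i \<le> l" for i
    using assms that RG_coeff[of i t] RG_coeff[of i s] by auto
  have sp: "(\<Sum>i=0..j. fps_nth (RG x) (i) * psum x (Suc j - i)) = psum x (Suc j) + (\<Sum>i=Suc 0..j. fps_nth (RG x) (i) * psum x (Suc j - i))" for x
    by (simp add: sum.atLeast_Suc_atMost RG_0)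
  have eq: "(\<Sum>i=Suc 0..j. fps_nth (RG t) (i) * psum t (Suc j - i)) = (\<Sum>i=Suc 0..j. fps_nth (RG s) (i) * psum s (Suc j - i))"
  proof (rule sum.cong)
    fix i assume i: "i \<in> {Suc 0..j}"
    then have "psum t (Suc j - i) = psum s (Suc j - i)" using less k by (intro less.IH) auto
    moreover have "fps_nth (RG t) (i) = fps_nth (RG s) (i)" using i less k by (intro G) auto
    ultimately show "fps_nth (RG t) (i) * psum t (Suc j - i) = fps_nth (RG s) (i) * psum s (Suc j - i)" by simp
  qed simp
  have "fps_nth (RG t) (Suc j) = fps_nth (RG s) (Suc j)" using less k by (intro G) auto
  then show ?case using RG_newton[of j t] RG_newton[of j s] sp[of t] sp[of s] eq k by simp
qed

lemma psum2: "psum t 2 = (fps_nth (RG t) (1))^2 - 2 * fps_nth (RG t) (2)"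
proof -
  have 1: "fps_nth (RG t) (1) = - psum t 1" using RG_newton[of 0 t] by (simp add: RG_0)
  have 2: "2 * fps_nth (RG t) (2) = - (psum t 2 + fps_nth (RG t) (1) * psum t 1)"
    using RG_newton[of 1 t] by (simp add: RG_0 numeral_2_eq_2)
  show ?thesis using 1 2 by (simp add: power2_eq_square algebra_simps)
qed

definition expand :: "nat list \<Rightarrow> real list \<Rightarrow> real list" where
  "expand u a = concat (map2 (\<lambda>m r. replicate m r) u a)"

lemma expand_Cons[simp]: "expand (m#u) (r#a) = replicate m r @ expand u a"
  by (simp add: expand_def)

lemma PP_expand: "PP u a = lins (expand u a)"
proof (induction u arbitrary: a)
  case Nil then show ?case by (simp add: lins_def expand_def)
next
  case (Cons m u) then show ?case
    by (cases a) (auto simp: lins_def expand_def prod_list_replicate)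
qed

lemma length_expand: "length u = length a \<Longrightarrow> length (expand u a) = sum_list u"
proof (induction u arbitrary: a)
  case Nil then show ?case by (simp add: expand_def)
next
  case (Cons m u) then show ?case by (cases a) auto
qed

lemma psum_expand: "length u = length a \<Longrightarrow>
  psum (expand u a) k = (\<Sum>j<length u. real (u!j) * (a!j)^k)"
proof (induction u arbitrary: a)
  case Nil then show ?case by (simp add: expand_def psum_def)
next
  case (Cons m u)
  then obtain r a' where a: "a = r # a'" by (cases a) auto
  have "psum (expand (m#u) a) k = real m * r^k + psum (expand u a') k"
    using a by (simp add: psum_def sum_list_replicate)
  also have "\<dots> = real m * r^k + (\<Sum>j<length u. real (u!j) * (a'!j)^k)" using Cons a by simp
  also have "\<dots> = (\<Sum>j<length (m#u). real ((m#u)!j) * (a!j)^k)"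
    using a by (subst length_Cons, subst sum.lessThan_Suc_shift) simp
  finally show ?case .
qed

lemma antideriv: "\<exists>Q. pderiv Q = q \<and> degree Q \<le> Suc (degree (q::real poly))"
proof -
  define Q where "Q = (\<Sum>k\<le>degree q. monom (coeff q k / real (Suc k)) (Suc k))"
  have "pderiv Q = (\<Sum>k\<le>degree q. pderiv (monom (coeff q k / real (Suc k)) (Suc k)))"
    unfolding Q_def using higher_pderiv_sum[of 1] by simp
  also have "\<dots> = (\<Sum>k\<le>degree q. monom (coeff q k) k)"
    by (intro sum.cong) (simp_all add: pderiv_monom)
  also have "\<dots> = q" by (rule poly_as_sum_of_monoms)
  finally have "pderiv Q = q" .
  moreover have "degree Q \<le> Suc (degree q)" unfolding Q_def
  proof (rule degree_sum_le)
    fix k assume "k \<in> {..degree q}"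
    then have "Suc k \<le> Suc (degree q)" by simp
    moreover have "degree (monom (coeff q k / real (Suc k)) (Suc k)) \<le> Suc k" by (rule degree_monom_le)
    ultimately show "degree (monom (coeff q k / real (Suc k)) (Suc k)) \<le> Suc (degree q)" by linarith
  qed simp
  ultimately show ?thesis by blast
qed

lemma mono_strict:
  fixes Q q :: "real poly"
  assumes "pderiv Q = q" "q \<noteq> 0" "lo < hi" "\<And>x. lo \<le> x \<Longrightarrow> x \<le> hi \<Longrightarrow> 0 \<le> poly q x"
  shows "poly Q lo < poly Q hi"
proof -
  have mn: "poly Q x \<le> poly Q y" if "lo \<le> x" "x \<le> y" "y \<le> hi" for x y
  proof (rule DERIV_nonneg_imp_increasing_open[of x y "poly Q"])
    show "x \<le> y" by fact
    fix z assume "x < z" "z < y"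
    then show "\<exists>y. (poly Q has_real_derivative y) (at z) \<and> 0 \<le> y"
    proof (intro exI conjI)
      show "(poly Q has_real_derivative poly q z) (at z)" using poly_DERIV[of Q z] assms(1) by simp
      show "0 \<le> poly q z" using assms(4)[of z] that \<open>x < z\<close> \<open>z < y\<close> by simp
    qed
  next
    show "continuous_on {x..y} (poly Q)" using continuous_on_poly[OF continuous_on_id, of "{x..y}" Q] by (simp add: id_def)
  qed
  show ?thesis
  proof (rule ccontr)
    assume "\<not> ?thesis"
    moreover have "poly Q lo \<le> poly Q hi" by (rule mn) (use assms(3) in auto)
    ultimately have eq: "poly Q lo = poly Q hi" by linarith
    have c: "poly Q x = poly Q lo" if "lo \<le> x" "x \<le> hi" for x
    proof -
      have "poly Q lo \<le> poly Q x" by (rule mn) (use that in auto)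
      moreover have "poly Q x \<le> poly Q hi" by (rule mn) (use that in auto)
      ultimately show ?thesis using eq by linarith
    qed
    define cc where "cc = poly Q lo"
    define R where "R = Q - [:cc:]"
    have c': "poly Q x = cc" if "lo \<le> x" "x \<le> hi" for x using c[OF that] by (simp add: cc_def)
    have "{lo..hi} \<subseteq> {x. poly R x = 0}" using c' by (auto simp: R_def)
    moreover have "infinite {lo..hi}" using assms(3) by (rule infinite_Icc)
    ultimately have "infinite {x. poly R x = 0}" by (rule infinite_super)
    then have "R = 0" using poly_roots_finite by blast
    then have "Q = [:cc:]" unfolding R_def by simp
    then have "pderiv Q = 0" by simp
    then show False using assms by simp
  qed
qed

context
  fixes a b :: "nat \<Rightarrow> real" and l :: nat
  assumes ma: "\<And>i j. i \<le> j \<Longrightarrow> j < l \<Longrightarrow> a i \<le> a j"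
    and mb: "\<And>i j. i \<le> j \<Longrightarrow> j < l \<Longrightarrow> b i \<le> b j"
begin

definition "tau j = sgn (a j - b j)"
definition "lo j = min (a j) (b j)"
definition "hi j = max (a j) (b j)"

lemma tau_cases: "tau j = 1 \<and> b j < a j \<or> tau j = -1 \<and> a j < b j \<or> tau j = 0 \<and> a j = b j"
  unfolding tau_def by (cases "a j < b j"; cases "b j < a j") (auto simp: sgn_real_def)

lemma lo_mono: "i \<le> j \<Longrightarrow> j < l \<Longrightarrow> lo i \<le> lo j"
  using ma[of i j] mb[of i j] unfolding lo_def by auto

lemma hi_mono: "i \<le> j \<Longrightarrow> j < l \<Longrightarrow> hi i \<le> hi j"
  using ma[of i j] mb[of i j] unfolding hi_def by auto

lemma lo_hi: "lo j \<le> hi j" unfolding lo_def hi_def by auto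

lemma cross: "i < j \<Longrightarrow> j < l \<Longrightarrow> tau i \<noteq> 0 \<Longrightarrow> tau j \<noteq> 0 \<Longrightarrow> tau i \<noteq> tau j \<Longrightarrow> hi i \<le> lo j"
  using ma[of i j] mb[of i j] tau_cases[of i] tau_cases[of j] unfolding lo_def hi_def by auto

lemma opp: "tau i \<noteq> 0 \<Longrightarrow> tau j \<noteq> 0 \<Longrightarrow> tau i \<noteq> tau j \<Longrightarrow> tau j = - tau i"
  using tau_cases[of i] tau_cases[of j] by auto

lemma INV: "k \<le> l \<Longrightarrow> (\<forall>j<k. tau j = 0) \<or>
  (\<exists>q i L. i < k \<and> tau i \<noteq> 0 \<and> q \<noteq> 0 \<and> degree q < k \<and>
     (\<forall>j. i < j \<and> j < k \<longrightarrow> tau j = 0) \<and>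
     (\<forall>j<k. \<forall>x. lo j \<le> x \<and> x \<le> hi j \<longrightarrow> 0 \<le> tau j * poly q x) \<and>
     (\<forall>x. L \<le> x \<longrightarrow> 0 \<le> tau i * poly q x) \<and> L \<le> hi i \<and>
     (\<forall>j. k \<le> j \<and> j < l \<and> tau j = tau i \<longrightarrow> L \<le> lo j))"
proof (induction k)
  case 0 then show ?case by simp
next
  case (Suc k)
  then have kl: "k < l" by simp
  from Suc kl consider (A) "\<forall>j<k. tau j = 0" | (B) q i L where "i < k" "tau i \<noteq> 0" "q \<noteq> 0" "degree q < k"
     "(\<forall>j. i < j \<and> j < k \<longrightarrow> tau j = 0)"
     "(\<forall>j<k. \<forall>x. lo j \<le> x \<and> x \<le> hi j \<longrightarrow> 0 \<le> tau j * poly q x)"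
     "(\<forall>x. L \<le> x \<longrightarrow> 0 \<le> tau i * poly q x)" "L \<le> hi i"
     "(\<forall>j. k \<le> j \<and> j < l \<and> tau j = tau i \<longrightarrow> L \<le> lo j)"
    by auto
  then show ?case
  proof cases
    case A
    show ?thesis
    proof (cases "tau k = 0")
      case True then show ?thesis using A by (auto simp: less_Suc_eq)
    next
      case False
      have sq: "0 \<le> tau k * tau k" by simp
      have "(\<forall>j<Suc k. \<forall>x. lo j \<le> x \<and> x \<le> hi j \<longrightarrow> 0 \<le> tau j * poly [:tau k:] x)"
        using A sq by (auto simp: less_Suc_eq)
      moreover have "\<forall>j. Suc k \<le> j \<and> j < l \<and> tau j = tau k \<longrightarrow> lo k \<le> lo j"
        using lo_mono by auto
      ultimately show ?thesis using False sq lo_hi[of k]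
        by (intro disjI2 exI[of _ "[:tau k:]"] exI[of _ k] exI[of _ "lo k"]) auto
    qed
  next
    case B
    consider (B0) "tau k = 0" | (B1) "tau k = tau i" "tau k \<noteq> 0" | (B2) "tau k \<noteq> tau i" "tau k \<noteq> 0"
      by metis
    then show ?thesis
    proof cases
      case B0
      have "(\<forall>j<Suc k. \<forall>x. lo j \<le> x \<and> x \<le> hi j \<longrightarrow> 0 \<le> tau j * poly q x)"
        using B(6) B0 by (auto simp: less_Suc_eq)
      moreover have "(\<forall>j. i < j \<and> j < Suc k \<longrightarrow> tau j = 0)" using B(5) B0 by (auto simp: less_Suc_eq)
      ultimately show ?thesis using B
        by (intro disjI2 exI[of _ q] exI[of _ i] exI[of _ L]) auto
    next
      case B1
      have Llo: "L \<le> lo k" using B(9) B1 kl by auto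
      have "(\<forall>j<Suc k. \<forall>x. lo j \<le> x \<and> x \<le> hi j \<longrightarrow> 0 \<le> tau j * poly q x)"
        using B(6) B(7) B1 Llo by (auto simp: less_Suc_eq)
      moreover have "L \<le> hi k" using Llo lo_hi[of k] by linarith
      ultimately show ?thesis using B B1
        by (intro disjI2 exI[of _ q] exI[of _ k] exI[of _ L]) auto
    next
      case B2
      define q' where "q' = q * [:hi i, -1:]"
      have pq: "poly q' x = poly q x * (hi i - x)" for x by (simp add: q'_def algebra_simps)
      have lnz: "[:hi i, -1:] \<noteq> 0" by simp
      have nz: "q' \<noteq> 0" unfolding q'_def using B(3) lnz by (rule no_zero_divisors)
      have "degree q' = degree q + degree [:hi i, -1:]" unfolding q'_def using B(3) lnz by (rule degree_mult_eq)
      then have dq: "degree q' = Suc (degree q)" by simp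
      have tk: "tau k = - tau i" using opp B(2) B2 by auto
      have hik: "hi i \<le> lo k" using cross[of i k] B(1,2) B2 kl by auto
      have Lh: "L \<le> hi i" by fact
      have tail: "0 \<le> tau k * poly q' x" if "hi i \<le> x" for x
      proof -
        have "0 \<le> tau i * poly q x" using B(7) Lh that by auto
        then have "0 \<le> (tau i * poly q x) * (x - hi i)" using that by simp
        also have "(tau i * poly q x) * (x - hi i) = tau k * poly q' x" by (simp add: pq tk algebra_simps)
        finally show ?thesis .
      qed
      have old: "0 \<le> tau j * poly q' x" if "j < Suc k" "lo j \<le> x" "x \<le> hi j" for j x
      proof (cases "j \<le> i")
        case True
        have "x \<le> hi i" using hi_mono[of j i] True B(1) kl that by auto
        moreover have "0 \<le> tau j * poly q x" using B(6) that True B(1) by auto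
        ultimately have "0 \<le> (tau j * poly q x) * (hi i - x)" by simp
        then show ?thesis by (simp add: pq algebra_simps)
      next
        case False
        show ?thesis
        proof (cases "j = k")
          case True then show ?thesis using tail hik that by auto
        next
          case False
          then have "tau j = 0" using B(5) \<open>\<not> j \<le> i\<close> that by auto
          then show ?thesis by simp
        qed
      qed
      have fut: "\<forall>j. Suc k \<le> j \<and> j < l \<and> tau j = tau k \<longrightarrow> hi i \<le> lo j"
      proof (intro allI impI)
        fix j assume j: "Suc k \<le> j \<and> j < l \<and> tau j = tau k"
        show "hi i \<le> lo j" using cross[of i j] j B(1,2) B2 by auto
      qed
      have "hi i \<le> hi k" using hi_mono[of i k] B(1) kl by auto
      then show ?thesis using nz dq B(4) old tail fut B2
        by (intro disjI2 exI[of _ q'] exI[of _ k] exI[of _ "hi i"]) auto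
    qed
  qed
qed

lemma moment_unique:
  fixes w :: "nat \<Rightarrow> real"
  assumes w: "\<And>j. j < l \<Longrightarrow> 0 < w j"
    and eq: "\<And>k. k \<le> l \<Longrightarrow> (\<Sum>j<l. w j * a j ^ k) = (\<Sum>j<l. w j * b j ^ k)"
  shows "\<forall>j<l. a j = b j"
proof (rule ccontr)
  assume "\<not> ?thesis"
  then obtain j0 where "j0 < l" "a j0 \<noteq> b j0" by auto
  then have "tau j0 \<noteq> 0" using tau_cases[of j0] by auto
  then obtain q i L where qi: "i < l" "tau i \<noteq> 0" "q \<noteq> 0" "degree q < l"
     "(\<forall>j<l. \<forall>x. lo j \<le> x \<and> x \<le> hi j \<longrightarrow> 0 \<le> tau j * poly q x)"
    using INV[of l] \<open>j0 < l\<close> by blast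
  obtain Q where Q: "pderiv Q = q" "degree Q \<le> Suc (degree q)" using antideriv by blast
  have dQ: "degree Q \<le> l" using Q qi by simp
  have trm: "0 \<le> w j * (poly Q (a j) - poly Q (b j)) \<and> (tau j \<noteq> 0 \<longrightarrow> 0 < w j * (poly Q (a j) - poly Q (b j)))"
    if "j < l" for j
  proof -
    have sgnq: "0 \<le> tau j * poly q x" if "lo j \<le> x" "x \<le> hi j" for x using qi(5) \<open>j < l\<close> that by auto
    consider "tau j = 1" "b j < a j" | "tau j = -1" "a j < b j" | "tau j = 0" "a j = b j"
      using tau_cases by blast
    then have "tau j \<noteq> 0 \<longrightarrow> poly Q (b j) < poly Q (a j)"
    proof cases
      case 1
      have "poly Q (b j) < poly Q (a j)"
        by (rule mono_strict[OF Q(1) qi(3) 1(2)]) (use sgnq 1 in \<open>auto simp: lo_def hi_def\<close>)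
      then show ?thesis by simp
    next
      case 2
      have "poly (-Q) (a j) < poly (-Q) (b j)"
        by (rule mono_strict[of _ "-q"]) (use Q qi sgnq 2 in \<open>auto simp: lo_def hi_def pderiv_minus\<close>)
      then show ?thesis by simp
    qed simp
    moreover have "tau j = 0 \<longrightarrow> a j = b j" using tau_cases[of j] by auto
    ultimately show ?thesis using w[OF that] by (cases "tau j = 0") auto
  qed
  have "0 < (\<Sum>j<l. w j * (poly Q (a j) - poly Q (b j)))"
  proof -
    have "w i * (poly Q (a i) - poly Q (b i)) \<le> (\<Sum>j<l. w j * (poly Q (a j) - poly Q (b j)))"
      by (rule member_le_sum) (use trm qi in auto)
    moreover have "0 < w i * (poly Q (a i) - poly Q (b i))" using trm qi by auto
    ultimately show ?thesis by linarith
  qed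
  moreover have "(\<Sum>j<l. w j * poly Q (c j)) = (\<Sum>k\<le>degree Q. coeff Q k * (\<Sum>j<l. w j * c j ^ k))" for c
  proof -
    have "(\<Sum>j<l. w j * poly Q (c j)) = (\<Sum>j<l. \<Sum>k\<le>degree Q. w j * (coeff Q k * c j ^ k))"
      by (simp add: poly_altdef sum_distrib_left)
    also have "\<dots> = (\<Sum>k\<le>degree Q. \<Sum>j<l. w j * (coeff Q k * c j ^ k))"
      by (rule sum.swap)
    also have "\<dots> = (\<Sum>k\<le>degree Q. coeff Q k * (\<Sum>j<l. w j * c j ^ k))"
      by (simp add: sum_distrib_left mult.left_commute)
    finally show ?thesis .
  qed
  then have "(\<Sum>j<l. w j * poly Q (a j)) = (\<Sum>j<l. w j * poly Q (b j))"
    using eq dQ by (auto intro!: sum.cong)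
  ultimately show False by (simp add: sum_subtractf algebra_simps)
qed

end

lemma coeff_mpoly: "coeff (mpoly d c) n = (if n = d then 1 else if n < d then c (d - n) else 0)"
proof -
  have "coeff (mpoly d c) n = (if d = n then 1 else 0) + (\<Sum>i=1..d. if d - i = n then c i else 0)"
    by (simp add: mpoly_def coeff_sum coeff_monom)
  also have "(\<Sum>i=1..d. if d - i = n then c i else 0) = (if n < d then c (d - n) else 0)"
  proof (cases "n < d")
    case True
    have "(\<Sum>i=1..d. if d - i = n then c i else 0) = (\<Sum>i=1..d. if i = d - n then c i else 0)"
      by (rule sum.cong) (use True in auto)
    also have "\<dots> = c (d - n)" using True by (subst sum.delta) auto
    finally show ?thesis using True by simp
  next
    case False
    have "(\<Sum>i=1..d. if d - i = n then c i else 0) = (\<Sum>i=1..d. 0)"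
      by (rule sum.cong) (use False in auto)
    then show ?thesis using False by simp
  qed
  finally show ?thesis by auto
qed

lemma monic_mpoly: "monic_deg d (mpoly d c)"
proof -
  have "degree (mpoly d c) = d"
  proof (rule order.antisym)
    show "degree (mpoly d c) \<le> d" by (rule degree_le) (simp add: coeff_mpoly)
    show "d \<le> degree (mpoly d c)" by (rule le_degree) (simp add: coeff_mpoly)
  qed
  then show ?thesis unfolding monic_deg_def by (simp add: coeff_mpoly)
qed

lemma coeff_Hpoly: "1 \<le> i \<Longrightarrow> i \<le> d \<Longrightarrow>
  coeff (Hpoly d s f x) (d - i) = (if i \<le> s then coeff f (d - i) else x i)"
  by (simp add: Hpoly_def coeff_mpoly hcoeff_def)

definition vecof :: "nat \<Rightarrow> nat \<Rightarrow> real poly \<Rightarrow> nat \<Rightarrow> real" where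
  "vecof d s h = (\<lambda>i. if s < i \<and> i \<le> d then coeff h (d - i) else 0)"

lemma Hpoly_vecof:
  assumes "monic_deg d h" "\<And>i. 1 \<le> i \<Longrightarrow> i \<le> s \<Longrightarrow> coeff h (d - i) = coeff f (d - i)"
  shows "Hpoly d s f (vecof d s h) = h"
proof (rule poly_eqI)
  fix n
  show "coeff (Hpoly d s f (vecof d s h)) n = coeff h n"
  proof (cases "n < d")
    case True
    define i where "i = d - n"
    have i: "1 \<le> i" "i \<le> d" "d - i = n" using True unfolding i_def by auto
    show ?thesis using coeff_Hpoly[OF i(1,2), of s f] assms(2)[of i] i
      by (auto simp: vecof_def)
  next
    case False
    then show ?thesis using assms(1) unfolding monic_deg_def
      by (auto simp: Hpoly_def coeff_mpoly coeff_eq_0)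
  qed
qed

lemma vecof_Hpoly: "x \<in> Hs d s f \<Longrightarrow> vecof d s (Hpoly d s f x) = x"
proof
  fix i assume x: "x \<in> Hs d s f"
  show "vecof d s (Hpoly d s f x) i = x i"
  proof (cases "s < i \<and> i \<le> d")
    case True
    then show ?thesis using coeff_Hpoly[of i d s f x] by (simp add: vecof_def)
  next
    case False
    then show ?thesis using x by (auto simp: vecof_def Hs_def)
  qed
qed

lemma length_le_sum: "\<forall>m\<in>set u. 0 < (m::nat) \<Longrightarrow> length u \<le> sum_list u"
  by (induction u) auto

lemma Hsu_char:
  assumes "composition d u" "s \<le> d"
  shows "x \<in> Hsu d s f u \<longleftrightarrow> (\<exists>a. sorted a \<and> length a = length u \<and> x = vecof d s (PP u a) \<and>
     (\<forall>i. 1 \<le> i \<and> i \<le> s \<longrightarrow> coeff (PP u a) (d - i) = coeff f (d - i)))"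
proof
  assume x: "x \<in> Hsu d s f u"
  define h where "h = Hpoly d s f x"
  have "monic_deg d h" unfolding h_def Hpoly_def by (rule monic_mpoly)
  moreover have "hyperbolic h" "comp_le (mult_tuple h) u" using x by (auto simp: Hsu_def Hs_def h_def)
  ultimately obtain a where a: "sorted a" "length a = length u" "h = PP u a" using char_i by blast
  have "x = vecof d s h" using vecof_Hpoly x unfolding h_def Hsu_def by auto
  moreover have "\<forall>i. 1 \<le> i \<and> i \<le> s \<longrightarrow> coeff h (d - i) = coeff f (d - i)"
    using coeff_Hpoly assms(2) unfolding h_def by auto
  ultimately show "\<exists>a. sorted a \<and> length a = length u \<and> x = vecof d s (PP u a) \<and>
     (\<forall>i. 1 \<le> i \<and> i \<le> s \<longrightarrow> coeff (PP u a) (d - i) = coeff f (d - i))"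
    using a by blast
next
  assume "\<exists>a. sorted a \<and> length a = length u \<and> x = vecof d s (PP u a) \<and>
     (\<forall>i. 1 \<le> i \<and> i \<le> s \<longrightarrow> coeff (PP u a) (d - i) = coeff f (d - i))"
  then obtain a where a: "sorted a" "length a = length u" "x = vecof d s (PP u a)"
     "\<forall>i. 1 \<le> i \<and> i \<le> s \<longrightarrow> coeff (PP u a) (d - i) = coeff f (d - i)" by blast
  have pos: "\<forall>m\<in>set u. 0 < m" and sd: "sum_list u = d" using assms by (auto simp: composition_def)
  have md: "monic_deg d (PP u a)" using PP_degree[of u a] PP_lead[of u a] a sd by (simp add: monic_deg_def)
  have H: "Hpoly d s f x = PP u a" unfolding a(3) by (rule Hpoly_vecof[OF md]) (use a(4) in auto)
  have hc: "hyperbolic (PP u a) \<and> comp_le (mult_tuple (PP u a)) u" using char_ii[OF a(1,2) pos] .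
  have "\<forall>i. i \<notin> {s<..d} \<longrightarrow> x i = 0" using a(3) by (auto simp: vecof_def)
  then show "x \<in> Hsu d s f u" using H hc by (simp add: Hsu_def Hs_def)
qed

lemma inj_proj:
  assumes "composition d u" "s \<le> d" "x \<in> Hsu d s f u" "y \<in> Hsu d s f u"
    and "proj s (length u) x = proj s (length u) y"
  shows "x = y"
proof -
  define l where "l = length u"
  have pos: "\<forall>m\<in>set u. 0 < m" and sd: "sum_list u = d" using assms by (auto simp: composition_def)
  have ld: "l \<le> d" using length_le_sum[OF pos] sd l_def by simp
  obtain a where a: "sorted a" "length a = l" "x = vecof d s (PP u a)"
     "\<forall>i. 1 \<le> i \<and> i \<le> s \<longrightarrow> coeff (PP u a) (d - i) = coeff f (d - i)"
    using Hsu_char[OF assms(1,2)] assms(3) l_def by blast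
  obtain b where b: "sorted b" "length b = l" "y = vecof d s (PP u b)"
     "\<forall>i. 1 \<le> i \<and> i \<le> s \<longrightarrow> coeff (PP u b) (d - i) = coeff f (d - i)"
    using Hsu_char[OF assms(1,2)] assms(4) l_def by blast
  define t where "t = expand u a"
  define t' where "t' = expand u b"
  have lt: "length t = d" "length t' = d" using length_expand a b sd l_def unfolding t_def t'_def by auto
  have da: "degree (PP u a) = d" "degree (PP u b) = d" using PP_degree a b sd l_def by auto
  have cf: "coeff (lins t) (d - k) = coeff (lins t') (d - k)" if "k \<le> l" for k
  proof -
    consider "k = 0" | "1 \<le> k" "k \<le> s" | "s < k" by linarith
    then have "coeff (PP u a) (d - k) = coeff (PP u b) (d - k)"
    proof cases
      case 1 then show ?thesis using da PP_lead[of u a] PP_lead[of u b] by simp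
    next
      case 2 then show ?thesis using a(4) b(4) by auto
    next
      case 3
      have "proj s l x k = proj s l y k" using assms(5) l_def by simp
      then show ?thesis using 3 that ld a(3) b(3) by (simp add: proj_def vecof_def)
    qed
    then show ?thesis by (simp add: t_def t'_def PP_expand)
  qed
  have ps: "psum t k = psum t' k" if "k \<le> l" for k
  proof (cases "k = 0")
    case True then show ?thesis using lt by (simp add: psum_def sum_list_triv)
  next
    case False then show ?thesis using newton_eq[OF lt ld cf] that by auto
  qed
  have eqs: "(\<Sum>j<l. real (u!j) * (a!j)^k) = (\<Sum>j<l. real (u!j) * (b!j)^k)" if "k \<le> l" for k
    using ps[OF that] psum_expand[of u a k] psum_expand[of u b k] a b l_def unfolding t_def t'_def by simp
  have "\<forall>j<l. a!j = b!j"
  proof (rule moment_unique[where a="\<lambda>j. a!j" and b="\<lambda>j. b!j" and l=l and w="\<lambda>j. real (u!j)"])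
    show "a!i \<le> a!j" if "i \<le> j" "j < l" for i j using a that by (simp add: sorted_nth_mono)
    show "b!i \<le> b!j" if "i \<le> j" "j < l" for i j using b that by (simp add: sorted_nth_mono)
    show "0 < real (u!j)" if "j < l" for j using pos that l_def by simp
    show "(\<Sum>j<l. real (u!j) * (a!j)^k) = (\<Sum>j<l. real (u!j) * (b!j)^k)" if "k \<le> l" for k
      using eqs that by simp
  qed
  then have "a = b" using a b by (intro nth_equalityI) auto
  then show ?thesis using a b by simp
qed

lemma tendsto_fun_iff:
  fixes X :: "'a \<Rightarrow> nat \<Rightarrow> real"
  shows "(X \<longlongrightarrow> L) F \<longleftrightarrow> (\<forall>i. ((\<lambda>n. X n i) \<longlongrightarrow> L i) F)"
  using limitin_componentwise[of "\<lambda>i. euclidean" UNIV X L F]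
  by (simp add: euclidean_product_topology limitin_canonical_iff)

lemma bw_multi:
  fixes X :: "nat \<Rightarrow> nat \<Rightarrow> real"
  assumes "\<And>n j. j < l \<Longrightarrow> \<bar>X n j\<bar> \<le> R"
  shows "\<exists>r L. strict_mono r \<and> (\<forall>j<l. (\<lambda>n. X (r n) j) \<longlonglongrightarrow> L j)"
  using assms
proof (induction l)
  case 0
  show ?case by (intro exI[of _ id]) (auto simp: strict_mono_def)
next
  case (Suc l)
  then obtain r L where r: "strict_mono r" "\<forall>j<l. (\<lambda>n. X (r n) j) \<longlonglongrightarrow> L j" by auto
  have "bounded (range (\<lambda>n. X (r n) l))"
    unfolding bounded_iff using Suc.prems[of l] by auto
  then obtain c r2 where r2: "strict_mono r2" "((\<lambda>n. X (r n) l) \<circ> r2) \<longlonglongrightarrow> c"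
    using bounded_imp_convergent_subsequence by blast
  have "strict_mono (r \<circ> r2)" using r(1) r2(1) by (simp add: strict_mono_def)
  moreover have "\<forall>j<Suc l. (\<lambda>n. X ((r \<circ> r2) n) j) \<longlonglongrightarrow> (L(l := c)) j"
  proof (intro allI impI)
    fix j assume j: "j < Suc l"
    show "(\<lambda>n. X ((r \<circ> r2) n) j) \<longlonglongrightarrow> (L(l := c)) j"
    proof (cases "j = l")
      case True then show ?thesis using r2(2) by (simp add: o_def)
    next
      case False
      then have "(\<lambda>n. X (r n) j) \<longlonglongrightarrow> L j" using r(2) j by auto
      from LIMSEQ_subseq_LIMSEQ[OF this r2(1)] show ?thesis using False by (simp add: o_def)
    qed
  qed
  ultimately show ?case by blast
qed

lemma conv_mult:
  assumes "\<And>k. (\<lambda>n. coeff (P n) k) \<longlonglongrightarrow> coeff P0 k" "\<And>k. (\<lambda>n. coeff (Q n) k) \<longlonglongrightarrow> coeff Q0 k"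
  shows "(\<lambda>n. coeff (P n * Q n :: real poly) k) \<longlonglongrightarrow> coeff (P0 * Q0) k"
  unfolding coeff_mult by (intro tendsto_sum tendsto_mult assms)

lemma conv_pow:
  assumes "\<And>k. (\<lambda>n. coeff (P n) k) \<longlonglongrightarrow> coeff P0 k"
  shows "(\<lambda>n. coeff (P n ^ m :: real poly) k) \<longlonglongrightarrow> coeff (P0 ^ m) k"
proof (induction m arbitrary: k)
  case 0 then show ?case by simp
next
  case (Suc m) then show ?case by (simp only: power_Suc) (intro conv_mult assms)
qed

lemma conv_lin:
  fixes X :: "nat \<Rightarrow> real"
  assumes "X \<longlonglongrightarrow> x"
  shows "(\<lambda>n. coeff [:- X n, 1:] k) \<longlonglongrightarrow> coeff [:-x, 1:] k"
proof (cases k)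
  case 0 then show ?thesis using tendsto_minus[OF assms] by simp
next
  case (Suc k') then show ?thesis by (cases k') simp_all
qed

lemma conv_PP:
  assumes "\<And>n. length (X n) = length u" "length a = length u"
    "\<And>j. j < length u \<Longrightarrow> (\<lambda>n. X n ! j) \<longlonglongrightarrow> a ! j"
  shows "(\<lambda>n. coeff (PP u (X n)) k) \<longlonglongrightarrow> coeff (PP u a) k"
  using assms
proof (induction u arbitrary: X a k)
  case Nil then show ?case by simp
next
  case (Cons m u)
  obtain r a' where a: "a = r # a'" using Cons.prems(2) by (cases a) auto
  have e: "PP (m#u) (X n) = [:- hd (X n), 1:]^m * PP u (tl (X n))" for n
  proof -
    obtain y ys where "X n = y # ys" using Cons.prems(1)[of n] by (cases "X n") auto
    then show ?thesis by simp
  qed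
  have hn: "X n ! 0 = hd (X n)" for n
  proof -
    obtain y ys where "X n = y # ys" using Cons.prems(1)[of n] by (cases "X n") auto
    then show ?thesis by simp
  qed
  have h: "(\<lambda>n. hd (X n)) \<longlonglongrightarrow> r"
    using Cons.prems(3)[of 0] a unfolding hn by simp
  have t: "(\<lambda>n. coeff (PP u (tl (X n))) k) \<longlonglongrightarrow> coeff (PP u a') k" for k
  proof (rule Cons.IH)
    show "length (tl (X n)) = length u" for n using Cons.prems(1)[of n] by simp
    show "length a' = length u" using Cons.prems(2) a by simp
    show "(\<lambda>n. tl (X n) ! j) \<longlonglongrightarrow> a' ! j" if "j < length u" for j
    proof -
      have tn: "tl (X n) ! j = X n ! Suc j" for n
      proof -
        obtain y ys where "X n = y # ys" using Cons.prems(1)[of n] by (cases "X n") auto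
        then show ?thesis by simp
      qed
      show ?thesis using Cons.prems(3)[of "Suc j"] that a unfolding tn by simp
    qed
  qed
  show ?case unfolding e a PP_Cons
    by (intro conv_mult conv_pow conv_lin h t)
qed

lemma abs_le_sq1: "\<bar>x::real\<bar> \<le> 1 + x^2"
proof (cases "\<bar>x\<bar> \<le> 1")
  case True then show ?thesis by (smt (verit) zero_le_power2)
next
  case False
  then have "\<bar>x\<bar> * 1 \<le> \<bar>x\<bar> * \<bar>x\<bar>" by (intro mult_left_mono) auto
  then show ?thesis by (simp add: power2_eq_square abs_mult_self_eq)
qed

lemma psum1: "psum t 1 = - fps_nth (RG t) 1"
  using RG_newton[of 0 t] by (simp add: RG_0)

lemma root_bound2:
  assumes comp: "composition d u" and a: "length a = length u" and l2: "2 \<le> length u" and j: "j < length u"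
  shows "\<bar>a!j\<bar> \<le> 1 + ((coeff (PP u a) (d-1))^2 - 2 * coeff (PP u a) (d-2))"
proof -
  have pos: "\<forall>m\<in>set u. 0 < m" and sd: "sum_list u = d" using comp by (auto simp: composition_def)
  have ld: "length u \<le> d" using length_le_sum[OF pos] sd by simp
  define t where "t = expand u a"
  have lt: "length t = d" using length_expand[OF a[symmetric]] sd t_def by simp
  have G1: "fps_nth (RG t) 1 = coeff (PP u a) (d-1)" using RG_coeff[of 1 t] lt l2 ld by (simp add: t_def PP_expand)
  have G2: "fps_nth (RG t) 2 = coeff (PP u a) (d-2)" using RG_coeff[of 2 t] lt l2 ld by (simp add: t_def PP_expand)
  have "psum t 2 = (\<Sum>i<length u. real (u!i) * (a!i)^2)" using psum_expand[OF a[symmetric]] t_def by simp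
  moreover have "real (u!j) * (a!j)^2 \<le> (\<Sum>i<length u. real (u!i) * (a!i)^2)"
    by (rule member_le_sum) (use j in auto)
  moreover have "(a!j)^2 \<le> real (u!j) * (a!j)^2"
  proof -
    have "1 \<le> real (u!j)" using pos j by (simp add: Suc_le_eq)
    then show ?thesis using mult_right_mono[of 1 "real (u!j)" "(a!j)^2"] by simp
  qed
  ultimately have "(a!j)^2 \<le> (coeff (PP u a) (d-1))^2 - 2 * coeff (PP u a) (d-2)"
    using psum2[of t] G1 G2 by simp
  then show ?thesis using abs_le_sq1[of "a!j"] by linarith
qed

lemma root_bound1:
  assumes comp: "composition d u" and a: "length a = length u" and l1: "length u = 1" and j: "j < length u"
  shows "\<bar>a!j\<bar> \<le> \<bar>coeff (PP u a) (d-1)\<bar>"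
proof -
  have pos: "\<forall>m\<in>set u. 0 < m" and sd: "sum_list u = d" using comp by (auto simp: composition_def)
  obtain m where u: "u = [m]" using l1 by (cases u) auto
  obtain r where ar: "a = [r]" using a l1 by (cases a) (auto simp: u)
  have md: "m = d" "0 < m" using sd pos u by auto
  define t where "t = expand u a"
  have lt: "length t = d" using length_expand[OF a[symmetric]] sd t_def by simp
  have G1: "fps_nth (RG t) 1 = coeff (PP u a) (d-1)" using RG_coeff[of 1 t] lt md by (simp add: t_def PP_expand)
  have "psum t 1 = real m * r" using psum_expand[OF a[symmetric], of 1] t_def u ar by simp
  then have "real m * r = - coeff (PP u a) (d-1)" using psum1[of t] G1 by simp
  then have "real m * \<bar>r\<bar> = \<bar>coeff (PP u a) (d-1)\<bar>" by (metis abs_minus_cancel abs_mult abs_of_nat)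
  moreover have "\<bar>r\<bar> \<le> real m * \<bar>r\<bar>" using md mult_right_mono[of 1 "real m" "\<bar>r\<bar>"] by simp
  ultimately show ?thesis using j l1 ar by simp
qed

lemma bounded_coeff:
  assumes X: "X \<longlonglongrightarrow> (c::real)"
  shows "\<exists>K. \<forall>n. \<bar>X n\<bar> \<le> K"
proof -
  have "Bseq X" using X by (intro convergent_imp_Bseq convergentI)
  then obtain K where "\<forall>n. norm (X n) \<le> K" by (auto elim: BseqE)
  then show ?thesis by auto
qed

lemma K_lemma:
  assumes comp: "composition d u" and sd: "s \<le> d" and sl: "s < length u"
    and xs: "\<And>n. xs n \<in> Hsu d s f u"
    and lim: "(\<lambda>n. proj s (length u) (xs n)) \<longlonglongrightarrow> y"
  shows "\<exists>x\<in>Hsu d s f u. proj s (length u) x = y \<and> (\<exists>r. strict_mono r \<and> (xs \<circ> r) \<longlonglongrightarrow> x)"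
proof -
  define l where "l = length u"
  have pos: "\<forall>m\<in>set u. 0 < m" and sumd: "sum_list u = d" using comp by (auto simp: composition_def)
  have ld: "l \<le> d" using length_le_sum[OF pos] sumd l_def by simp
  have l1: "1 \<le> l" using sl l_def by simp
  have ex: "\<forall>n. \<exists>a. sorted a \<and> length a = l \<and> xs n = vecof d s (PP u a) \<and>
     (\<forall>i. 1 \<le> i \<and> i \<le> s \<longrightarrow> coeff (PP u a) (d - i) = coeff f (d - i))"
    using Hsu_char[OF comp sd] xs l_def by blast
  from choice[OF ex] obtain A where A: "\<And>n. sorted (A n) \<and> length (A n) = l \<and> xs n = vecof d s (PP u (A n)) \<and>
     (\<forall>i. 1 \<le> i \<and> i \<le> s \<longrightarrow> coeff (PP u (A n)) (d - i) = coeff f (d - i))" by blast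
  have ycomp: "(\<lambda>n. proj s l (xs n) i) \<longlonglongrightarrow> y i" for i
    using lim unfolding tendsto_fun_iff l_def by blast
  have pxs: "proj s l (xs n) i = coeff (PP u (A n)) (d - i)" if "s < i" "i \<le> l" for n i
    using A[of n] that ld by (simp add: proj_def vecof_def)
  have bnd: "\<exists>K. \<forall>n. \<bar>coeff (PP u (A n)) (d - i)\<bar> \<le> K" if "1 \<le> i" "i \<le> l" for i
  proof (cases "i \<le> s")
    case True
    then show ?thesis using A that by (intro exI[of _ "\<bar>coeff f (d - i)\<bar>"]) auto
  next
    case False
    then have "(\<lambda>n. coeff (PP u (A n)) (d - i)) \<longlonglongrightarrow> y i" using ycomp[of i] pxs[of i] that by simp
    then show ?thesis by (rule bounded_coeff)
  qed
  have "\<exists>R. \<forall>n j. j < l \<longrightarrow> \<bar>A n ! j\<bar> \<le> R"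
  proof (cases "l = 1")
    case True
    obtain K1 where K1: "\<forall>n. \<bar>coeff (PP u (A n)) (d - 1)\<bar> \<le> K1" using bnd[of 1] True by auto
    show ?thesis
    proof (intro exI allI impI)
      fix n j assume "j < l"
      then have "\<bar>A n ! j\<bar> \<le> \<bar>coeff (PP u (A n)) (d - 1)\<bar>"
        by (intro root_bound1[OF comp]) (use A[of n] True l_def in auto)
      then show "\<bar>A n ! j\<bar> \<le> K1" using K1 by (meson order.trans)
    qed
  next
    case False
    then have l2: "2 \<le> l" using l1 by simp
    obtain K1 where K1: "\<forall>n. \<bar>coeff (PP u (A n)) (d - 1)\<bar> \<le> K1" using bnd[of 1] l1 by auto
    obtain K2 where K2: "\<forall>n. \<bar>coeff (PP u (A n)) (d - 2)\<bar> \<le> K2" using bnd[of 2] l2 by auto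
    show ?thesis
    proof (intro exI allI impI)
      fix n j assume j: "j < l"
      have "\<bar>A n ! j\<bar> \<le> 1 + ((coeff (PP u (A n)) (d-1))^2 - 2 * coeff (PP u (A n)) (d-2))"
        by (intro root_bound2[OF comp]) (use A[of n] l2 j l_def in auto)
      moreover have "(coeff (PP u (A n)) (d-1))^2 \<le> K1^2"
        using power_mono[OF K1[rule_format, of n] abs_ge_zero, of 2] by simp
      moreover have "- coeff (PP u (A n)) (d-2) \<le> K2" using K2[rule_format, of n] by linarith
      ultimately show "\<bar>A n ! j\<bar> \<le> 1 + K1^2 + 2 * K2" by linarith
    qed
  qed
  then obtain R where R: "\<And>n j. j < l \<Longrightarrow> \<bar>A n ! j\<bar> \<le> R" by blast
  obtain r L where rL: "strict_mono r" "\<forall>j<l. (\<lambda>n. A (r n) ! j) \<longlonglongrightarrow> L j"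
    using bw_multi[of l "\<lambda>n j. A n ! j" R] R by blast
  define a where "a = map L [0..<l]"
  have la: "length a = l" by (simp add: a_def)
  have aj: "j < l \<Longrightarrow> a ! j = L j" for j by (simp add: a_def)
  have sa: "sorted a"
  proof (rule sorted_iff_nth_mono[THEN iffD2], intro allI impI)
    fix i j assume ij0: "i \<le> j" "j < length a"
    then have ij: "i \<le> j \<and> j < length a" by simp
    have "\<forall>n. A (r n) ! i \<le> A (r n) ! j" using A ij la by (simp add: sorted_nth_mono)
    then show "a ! i \<le> a ! j" using ij la aj rL(2)
      by (intro LIMSEQ_le[of "\<lambda>n. A (r n) ! i" _ "\<lambda>n. A (r n) ! j"]) auto
  qed
  have conv: "(\<lambda>n. coeff (PP u (A (r n))) k) \<longlonglongrightarrow> coeff (PP u a) k" for k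
  proof (rule conv_PP)
    show "length (A (r n)) = length u" for n using A l_def by simp
    show "length a = length u" using la l_def by simp
    show "(\<lambda>n. A (r n) ! j) \<longlonglongrightarrow> a ! j" if "j < length u" for j using rL(2) aj that l_def by simp
  qed
  have cf: "\<forall>i. 1 \<le> i \<and> i \<le> s \<longrightarrow> coeff (PP u a) (d - i) = coeff f (d - i)"
  proof (intro allI impI)
    fix i assume i: "1 \<le> i \<and> i \<le> s"
    have "(\<lambda>n. coeff (PP u (A (r n))) (d - i)) = (\<lambda>n. coeff f (d - i))" using A i by auto
    then have "(\<lambda>n. coeff f (d - i)) \<longlonglongrightarrow> coeff (PP u a) (d - i)" using conv[of "d - i"] by simp
    then show "coeff (PP u a) (d - i) = coeff f (d - i)" using tendsto_const LIMSEQ_unique by blast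
  qed
  define x where "x = vecof d s (PP u a)"
  have xH: "x \<in> Hsu d s f u" unfolding Hsu_char[OF comp sd] x_def using sa la cf l_def by blast
  have xr: "(xs \<circ> r) \<longlonglongrightarrow> x"
    unfolding tendsto_fun_iff
  proof
    fix i
    show "(\<lambda>n. (xs \<circ> r) n i) \<longlonglongrightarrow> x i"
    proof (cases "s < i \<and> i \<le> d")
      case True
      then show ?thesis using conv[of "d - i"] A by (simp add: x_def vecof_def o_def)
    next
      case False
      have "(\<lambda>n. (xs \<circ> r) n i) = (\<lambda>n. 0)" using A False by (auto simp: vecof_def)
      moreover have "x i = 0" using False unfolding x_def vecof_def by auto
      ultimately show ?thesis by simp
    qed
  qed
  have px: "proj s l x = y"
  proof
    fix i
    show "proj s l x i = y i"
    proof (cases "s < i \<and> i \<le> l")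
      case True
      have "(\<lambda>n. proj s l (xs (r n)) i) \<longlonglongrightarrow> y i"
        using LIMSEQ_subseq_LIMSEQ[OF ycomp[of i] rL(1)] by (simp add: o_def)
      moreover have "(\<lambda>n. proj s l (xs (r n)) i) = (\<lambda>n. coeff (PP u (A (r n))) (d - i))"
        using pxs True by auto
      ultimately have "(\<lambda>n. coeff (PP u (A (r n))) (d - i)) \<longlonglongrightarrow> y i" by simp
      then have "y i = coeff (PP u a) (d - i)" using conv[of "d - i"] LIMSEQ_unique by blast
      then show ?thesis using True ld by (simp add: proj_def x_def vecof_def)
    next
      case False
      then have "(\<lambda>n. proj s l (xs n) i) = (\<lambda>n. 0)" unfolding proj_def by auto
      then have "y i = 0" using ycomp[of i] LIMSEQ_unique tendsto_const by metis
      then show ?thesis using False unfolding proj_def by auto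
    qed
  qed
  show ?thesis using xH px xr rL(1) l_def by blast
qed

theorem mainTheorem6:
  fixes d s :: nat and f :: "real poly" and u :: "nat list"
  assumes "d \<ge> 1"
    and "monic_deg d f" and "hyperbolic f"
    and "s \<le> d"
    and "composition d u" and "length u > s"
  shows "(\<exists>g. homeomorphism (Hsu d s f u) (proj s (length u) ` Hsu d s f u)
                              (proj s (length u)) g)
       \<and> closedin (top_of_set (coord_space s (length u)))
                  (proj s (length u) ` Hsu d s f u)"
proof -
  define l where "l = length u"
  define S where "S = Hsu d s f u"
  define p where "p = proj s l"
  define T where "T = p ` S"
  have comp: "composition d u" and sd: "s \<le> d" and sl: "s < length u" using assms by auto
  have inj: "inj_on p S"
    unfolding inj_on_def p_def S_def l_def using inj_proj[OF comp sd] by blast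
  have K: "\<exists>x\<in>S. p x = y \<and> (\<exists>r. strict_mono r \<and> (xs \<circ> r) \<longlonglongrightarrow> x)"
    if "\<And>n. xs n \<in> S" "(\<lambda>n. p (xs n)) \<longlonglongrightarrow> y" for xs y
    using K_lemma[OF comp sd sl, where xs=xs and y=y and f=f] that unfolding S_def p_def l_def by blast
  define g where "g = inv_into S p"
  have contp: "continuous_on S p"
  proof (rule continuous_on_coordinatewise_then_product)
    fix i
    show "continuous_on S (\<lambda>x. p x i)"
    proof (cases "s < i \<and> i \<le> l")
      case True
      then have e: "(\<lambda>x. p x i) = (\<lambda>x. x i)" by (auto simp: p_def proj_def)
      show ?thesis unfolding e by (rule continuous_on_subset[OF continuous_on_product_coordinates]) simp
    next
      case False
      then have e: "(\<lambda>x. p x i) = (\<lambda>x. 0)" unfolding p_def proj_def by auto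
      show ?thesis unfolding e by (rule continuous_on_const)
    qed
  qed
  have contg: "continuous_on T g"
  proof (rule continuous_on_sequentiallyI)
    fix v b assume v: "\<forall>n. v n \<in> T" "b \<in> T" "v \<longlonglongrightarrow> b"
    show "(\<lambda>n. g (v n)) \<longlonglongrightarrow> g b"
    proof (rule ccontr)
      assume "\<not> ?thesis"
      then obtain U where U: "open U" "g b \<in> U" "\<not> eventually (\<lambda>n. g (v n) \<in> U) sequentially"
        unfolding tendsto_def by blast
      have inf: "infinite {n. g (v n) \<notin> U}"
      proof
        assume "finite {n. g (v n) \<notin> U}"
        then obtain m where m: "\<forall>n\<in>{n. g (v n) \<notin> U}. n \<le> m" by (auto simp: finite_nat_set_iff_bounded_le)
        have "eventually (\<lambda>n. g (v n) \<in> U) sequentially"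
        proof (rule eventually_sequentiallyI[of "Suc m"])
          fix n assume "Suc m \<le> n" then show "g (v n) \<in> U" using m by force
        qed
        then show False using U by simp
      qed
      obtain r :: "nat \<Rightarrow> nat" where r: "strict_mono r" "\<forall>n. r n \<in> {n. g (v n) \<notin> U}" using infinite_enumerate[OF inf] by meson
      define xs where "xs = (\<lambda>n. g (v (r n)))"
      have xsS: "xs n \<in> S" for n unfolding xs_def g_def using v(1) T_def by (auto intro: inv_into_into)
      have pxs: "p (xs n) = v (r n)" for n unfolding xs_def g_def using v(1) T_def by (simp add: f_inv_into_f)
      have "(\<lambda>n. p (xs n)) \<longlonglongrightarrow> b" unfolding pxs using LIMSEQ_subseq_LIMSEQ[OF v(3) r(1)] by (simp add: o_def)
      from K[OF xsS this] obtain x r2 where x: "x \<in> S" "p x = b" "strict_mono r2" "(xs \<circ> r2) \<longlonglongrightarrow> x" by blast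
      have gb: "g b \<in> S" "p (g b) = b" unfolding g_def using v(2) T_def by (auto simp: inv_into_into f_inv_into_f)
      have "x = g b" using inj x gb by (metis inj_on_def)
      then have "eventually (\<lambda>n. (xs \<circ> r2) n \<in> U) sequentially" using x(4) U(1,2) topological_tendstoD by blast
      then obtain n where "(xs \<circ> r2) n \<in> U" using eventually_sequentially by (metis order.refl)
      moreover have "xs m \<notin> U" for m using r(2) unfolding xs_def by auto
      ultimately show False by simp
    qed
  qed
  have homeo: "homeomorphism S T p g"
    unfolding homeomorphism_def
  proof (intro conjI)
    show "\<forall>x\<in>S. g (p x) = x" unfolding g_def using inj by (simp add: inv_into_f_f)
    show "p ` S = T" by (simp add: T_def)
    show "continuous_on S p" by (rule contp)
    show "\<forall>y\<in>T. p (g y) = y" unfolding g_def T_def by (simp add: f_inv_into_f)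
    show "g ` T = S" unfolding g_def T_def using inj by (simp add: inv_into_image_cancel)
    show "continuous_on T g" by (rule contg)
  qed
  have clT: "closed T"
    unfolding closed_sequential_limits
  proof (intro allI impI)
    fix xs y assume a: "(\<forall>n. xs n \<in> T) \<and> xs \<longlonglongrightarrow> y"
    define zs where "zs = (\<lambda>n. g (xs n))"
    have zS: "zs n \<in> S" for n unfolding zs_def g_def using a T_def by (auto intro: inv_into_into)
    have pz: "p (zs n) = xs n" for n unfolding zs_def g_def using a T_def by (simp add: f_inv_into_f)
    have "(\<lambda>n. p (zs n)) \<longlonglongrightarrow> y" unfolding pz using a by simp
    from K[OF zS this] obtain x where "x \<in> S" "p x = y" by blast
    then show "y \<in> T" unfolding T_def by blast
  qed
  have sub: "T \<subseteq> coord_space s l"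
    unfolding T_def p_def coord_space_def proj_def by auto
  have "closedin (top_of_set (coord_space s l)) T"
    unfolding closedin_closed using clT sub by (intro exI[of _ T]) auto
  then show ?thesis using homeo unfolding S_def T_def p_def l_def by blast
qed

end
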